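(* Assume that for every nonempty $T\subseteq\mathbb{S}$ and every $i\in T$, the equilibrium demand satisfies $\bar q_i(T)<1/2$. If some set maximizing $\overline{re}$ over nonempty subsets of $\mathbb{S}$ has cardinality $k^*\ge2$, then $\{1,2,\dots,k^*\}$ also maximizes $\overline{re}$ over nonempty subsets of $\mathbb{S}$.
   Context: Market model: sellers $\mathbb{S}=\{1,\dots,n\}$, product qualities $\theta_1\ge\dots\ge\theta_n\ge0$. For displayed set $S$ and prices $p_i\ge0$: $a_i=e^{\theta_i-p_i}$, MNL demand $q_i=a_i/(1+\sum_{j\in S}a_j)$; sellers in $S$ play the Bertrand game (seller $i$ chooses $p_i\ge0$ to maximize $p_iq_i$). $V:(0,\infty)\to(0,1)$: $V(x)=$ the unique $v\in(0,1)$ with $v\exp(v/(1-v))=x$. For nonempty $T$, $\bar q_0(T)\in(0,1)$ is the unique solution of $\sum_{i\in T}V(\bar q_0e^{\theta_i-1})=1-\bar q_0$, $\bar q_i(T)=V(\bar q_0(T)e^{\theta_i-1})$ are the equilibrium demands, and the equilibrium revenue is $\overline{re}(T)=\sum_{i\in T}\frac{\bar q_i(T)}{1-\bar q_i(T)}$. *)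

theory Defs
  imports "HOL-Analysis.Analysis"
begin

definition V :: "real \<Rightarrow> real" where
  "V x = (THE v. 0 < v \<and> v < 1 \<and> v * exp (v / (1 - v)) = x)"

definition qbar0 :: "(nat \<Rightarrow> real) \<Rightarrow> nat set \<Rightarrow> real" where
  "qbar0 \<theta> T = (THE q0. 0 < q0 \<and> q0 < 1 \<and>
      (\<Sum>i\<in>T. V (q0 * exp (\<theta> i - 1))) = 1 - q0)"

definition qbar :: "(nat \<Rightarrow> real) \<Rightarrow> nat set \<Rightarrow> nat \<Rightarrow> real" where
  "qbar \<theta> T i = V (qbar0 \<theta> T * exp (\<theta> i - 1))"

definition re_bar :: "(nat \<Rightarrow> real) \<Rightarrow> nat set \<Rightarrow> real" where
  "re_bar \<theta> T = (\<Sum>i\<in>T. qbar \<theta> T i / (1 - qbar \<theta> T i))"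

end

theory Submission
  imports Defs
begin


definition w :: "real \<Rightarrow> real" where "w v = v * exp (v / (1 - v))"
definition wd :: "real \<Rightarrow> real" where "wd v = exp (v / (1 - v)) * (1 + v / (1 - v)^2)"

lemma w_strict: assumes "0 < a" "a < b" "b < 1" shows "w a < w b"
proof -
  have "a / (1 - a) < b / (1 - b)" using assms by (simp add: field_simps)
  hence "exp (a/(1-a)) < exp (b/(1-b))" by simp
  thus ?thesis unfolding w_def using assms
    by (intro mult_strict_mono) auto
qed

lemma w_ge: assumes "0 \<le> v" "v < 1" shows "v \<le> w v"
proof -
  have "1 \<le> exp (v/(1-v))" using assms by simp
  thus ?thesis unfolding w_def using assms by (simp add: mult_le_cancel_left1)
qed

lemma w_cont: assumes "0 < a" "b < 1" shows "continuous_on {a..b} w"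
  unfolding w_def using assms by (intro continuous_intros) auto

lemma w_surj: assumes "0 < x" shows "\<exists>v. 0 < v \<and> v < 1 \<and> w v = x"
proof -
  define a where "a = min (1/2) (x / 6)"
  define b where "b = (2*x+1)/(2*x+2)"
  have a: "0 < a" "a \<le> 1/2" using assms by (auto simp: a_def)
  have b: "1/2 \<le> b" "b < 1" using assms by (auto simp: b_def field_simps)
  have "w a \<le> a * exp 1" unfolding w_def using a by (intro mult_left_mono) (auto simp: field_simps)
  also have "\<dots> \<le> a * 3" using a exp_le by (intro mult_left_mono) auto
  finally have wa: "w a < x" using a assms by (auto simp: a_def)
  have "1 + b/(1-b) \<le> exp (b/(1-b))" using b by (intro exp_ge_add_one_self)
  hence "b * (1 + b/(1-b)) \<le> w b" unfolding w_def using b by (intro mult_left_mono) auto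
  moreover have "b * (1 + b/(1-b)) = b/(1-b)" using b by (simp add: field_simps)
  moreover have "b/(1-b) = 2*x+1" using assms by (simp add: b_def field_simps)
  ultimately have wb: "x < w b" using assms by linarith
  have "a \<le> b" using a b by simp
  from IVT'[of w a x b] wa wb this w_cont[of a b] a b
  obtain v where "a \<le> v" "v \<le> b" "w v = x" by auto
  thus ?thesis using a b by (intro exI[of _ v]) auto
qed

lemma V_props: assumes "0 < x" shows "0 < V x" "V x < 1" "w (V x) = x"
proof -
  have ex: "\<exists>!v. 0 < v \<and> v < 1 \<and> v * exp (v / (1 - v)) = x"
  proof -
    obtain v where v: "0 < v" "v < 1" "w v = x" using w_surj assms by blast
    show ?thesis
    proof (rule ex1I[of _ v])
      show "0 < v \<and> v < 1 \<and> v * exp (v / (1 - v)) = x" using v by (simp add: w_def)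
      fix u assume u: "0 < u \<and> u < 1 \<and> u * exp (u / (1 - u)) = x"
      show "u = v"
      proof (rule ccontr)
        assume "u \<noteq> v"
        then consider "u < v" | "v < u" by linarith
        thus False using w_strict[of u v] w_strict[of v u] u v by (cases; auto simp: w_def)
      qed
    qed
  qed
  from theI'[OF ex] show "0 < V x" "V x < 1" "w (V x) = x" by (auto simp: V_def w_def)
qed

lemma V_w: assumes "0 < v" "v < 1" shows "V (w v) = v"
proof -
  have wp: "0 < w v" unfolding w_def using assms by simp
  note p = V_props[OF wp]
  show ?thesis
  proof (rule ccontr)
    assume "V (w v) \<noteq> v"
    then consider "V (w v) < v" | "v < V (w v)" by linarith
    thus False using w_strict[of "V (w v)" v] w_strict[of v "V (w v)"] p assms by cases auto
  qed
qed

lemma V_strict: assumes "0 < x" "x < y" shows "V x < V y"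
proof (rule ccontr)
  assume "\<not> V x < V y"
  hence "V y \<le> V x" by simp
  hence "w (V y) \<le> w (V x)" using w_strict[of "V y" "V x"] V_props[of x] V_props[of y] assms
    by (cases "V y = V x") auto
  thus False using V_props[of x] V_props[of y] assms by simp
qed

lemma V_mono: assumes "0 < x" "x \<le> y" shows "V x \<le> V y"
  using V_strict[of x y] assms by (cases "x = y") auto

lemma V_le: assumes "0 < x" shows "V x \<le> x"
  using w_ge[of "V x"] V_props[OF assms] by simp

lemma w_deriv: assumes "v < 1" shows "(w has_real_derivative wd v) (at v)"
  unfolding w_def wd_def using assms
  by (auto intro!: derivative_eq_intros simp: field_simps power2_eq_square)

lemma wd_pos: assumes "0 < v" "v < 1" shows "0 < wd v"
  unfolding wd_def using assms by (intro mult_pos_pos) (auto intro: add_pos_nonneg)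

lemma V_deriv: assumes "0 < x" shows "(V has_real_derivative inverse (wd (V x))) (at x)"
proof -
  let ?v = "V x"
  have v: "0 < ?v" "?v < 1" "w ?v = x" using V_props[OF assms] by auto
  define a where "a = ?v / 2"
  define b where "b = (1 + ?v) / 2"
  have ab: "0 < a" "a < ?v" "?v < b" "b < 1" using v by (auto simp: a_def b_def)
  have cont: "isCont V (w ?v)"
  proof (rule isCont_inverse_function2[where a=a and b=b and f=w and x="V x"])
    fix z assume "a \<le> z" "z \<le> b" thus "V (w z) = z" using V_w ab by auto
  next
    fix z assume "a \<le> z" "z \<le> b" thus "isCont w z" using w_deriv[of z] ab
      by (auto intro: DERIV_isCont)
  qed (use ab in auto)
  show ?thesis
  proof (rule DERIV_inverse_function[where f=w and a=0 and b="x+1"])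
    show "(w has_real_derivative wd (V x)) (at (V x))" using w_deriv v by auto
    show "wd (V x) \<noteq> 0" using wd_pos v by (metis less_irrefl)
    show "isCont V x" using cont v by simp
    fix y assume "0 < y" "y < x + 1" thus "w (V y) = y" using V_props by auto
  qed (use assms in auto)
qed



lemma V_isCont: assumes "0 < x" shows "isCont V x"
  using V_deriv[OF assms] by (rule DERIV_isCont)

lemma V_cont_on: "continuous_on {0<..} V"
  by (intro continuous_at_imp_continuous_on ballI V_isCont) auto

lemma cont_Vq: assumes "0 < a" "0 < c" shows "continuous_on {a..b} (\<lambda>q. V (q * c))"
proof -
  have "continuous_on {a..b} (\<lambda>q. q * c)" by (intro continuous_intros)
  moreover have "(\<lambda>q. q * c) ` {a..b} \<subseteq> {0<..}" using assms by auto
  ultimately show ?thesis using continuous_on_compose2[OF V_cont_on] by blast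
qed

definition FF :: "(nat \<Rightarrow> real) \<Rightarrow> nat set \<Rightarrow> real \<Rightarrow> real" where
  "FF \<theta> T q = (\<Sum>i\<in>T. V (q * exp (\<theta> i - 1))) + q"

lemma FF_strict: fixes \<theta> :: "nat \<Rightarrow> real"
 assumes "0 < q" "q < r" shows "FF \<theta> T q < FF \<theta> T r"
proof -
  have "(\<Sum>i\<in>T. V (q * exp (\<theta> i - 1))) \<le> (\<Sum>i\<in>T. V (r * exp (\<theta> i - 1)))"
    using assms by (intro sum_mono V_mono) auto
  thus ?thesis using assms unfolding FF_def by linarith
qed

lemma qbar0_exists: fixes \<theta> :: "nat \<Rightarrow> real"
 assumes "finite T" "T \<noteq> {}"
  shows "\<exists>q. 0 < q \<and> q < 1 \<and> (\<Sum>i\<in>T. V (q * exp (\<theta> i - 1))) = 1 - q"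
proof -
  define E where "E = (\<Sum>i\<in>T. exp (\<theta> i - 1))"
  have E: "0 \<le> E" unfolding E_def by (intro sum_nonneg) auto
  define a where "a = 1 / (2 * (1 + E))"
  have a: "0 < a" "a < 1" using E by (auto simp: a_def field_simps)
  have "(\<Sum>i\<in>T. V (a * exp (\<theta> i - 1))) \<le> (\<Sum>i\<in>T. a * exp (\<theta> i - 1))"
    using a by (intro sum_mono V_le) auto
  also have "\<dots> = a * E" by (simp add: E_def sum_distrib_left)
  finally have "FF \<theta> T a \<le> a * (1 + E)" unfolding FF_def by (simp add: algebra_simps)
  also have "\<dots> = 1/2" using E by (simp add: a_def)
  finally have Fa: "FF \<theta> T a \<le> 1" by simp
  have "0 < (\<Sum>i\<in>T. V (1 * exp (\<theta> i - 1)))"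
    using assms by (intro sum_pos V_props) auto
  hence F1': "1 < FF \<theta> T 1" unfolding FF_def by simp
  hence F1: "1 \<le> FF \<theta> T 1" by simp
  have cont: "continuous_on {a..1} (FF \<theta> T)" unfolding FF_def
    using a by (intro continuous_intros continuous_on_sum cont_Vq) auto
  from IVT'[of "FF \<theta> T" a 1 1, OF Fa F1 _ cont] a
  obtain q where q: "a \<le> q" "q \<le> 1" "FF \<theta> T q = 1" by auto
  have "q \<noteq> 1" using F1' q by auto
  thus ?thesis using q a by (intro exI[of _ q]) (auto simp: FF_def)
qed

lemma qbar0_unique: fixes \<theta> :: "nat \<Rightarrow> real"
 assumes "0 < q" "q < 1" "(\<Sum>i\<in>T. V (q * exp (\<theta> i - 1))) = 1 - q"
    "0 < r" "r < 1" "(\<Sum>i\<in>T. V (r * exp (\<theta> i - 1))) = 1 - r"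
  shows "q = r"
proof (rule ccontr)
  assume "q \<noteq> r"
  then consider "q < r" | "r < q" by linarith
  thus False using FF_strict[of q r \<theta> T] FF_strict[of r q \<theta> T] assms
    by cases (auto simp: FF_def)
qed

lemma qbar0_props: fixes \<theta> :: "nat \<Rightarrow> real"
 assumes "finite T" "T \<noteq> {}"
  shows "0 < qbar0 \<theta> T" "qbar0 \<theta> T < 1"
    "(\<Sum>i\<in>T. V (qbar0 \<theta> T * exp (\<theta> i - 1))) = 1 - qbar0 \<theta> T"
proof -
  have "\<exists>!q. 0 < q \<and> q < 1 \<and> (\<Sum>i\<in>T. V (q * exp (\<theta> i - 1))) = 1 - q"
    using qbar0_exists[OF assms] qbar0_unique by blast
  from theI'[OF this] show "0 < qbar0 \<theta> T" "qbar0 \<theta> T < 1"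
    "(\<Sum>i\<in>T. V (qbar0 \<theta> T * exp (\<theta> i - 1))) = 1 - qbar0 \<theta> T"
    unfolding qbar0_def by auto
qed

lemma qbar0_eq: fixes \<theta> :: "nat \<Rightarrow> real"
 assumes "finite T" "T \<noteq> {}" "0 < q" "q < 1"
  "(\<Sum>i\<in>T. V (q * exp (\<theta> i - 1))) = 1 - q" shows "qbar0 \<theta> T = q"
  using qbar0_unique[OF qbar0_props[OF assms(1,2)]] assms(3-5) by blast

definition hh :: "real \<Rightarrow> real" where "hh v = v / (1 + v / (1 - v)^2)"
definition pp :: "real \<Rightarrow> real" where "pp v = v^2 / (1 - v + v^2)"
definition ppd :: "real \<Rightarrow> real" where "ppd v = (2 * v - v ^ 2) / (1 - v + v ^ 2) ^ 2"
definition kk :: "real \<Rightarrow> real" where "kk v = v / (1 - v + v^2)"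
definition gg :: "real \<Rightarrow> real" where "gg v = v / (1 - v)"

lemma D_pos: "0 < 1 - v + (v::real)^2"
proof -
  have "1 - v + v^2 = (v - 1/2)^2 + 3/4" by (simp add: power2_eq_square algebra_simps)
  moreover have "0 \<le> (v - 1/2)^2" by simp
  ultimately show ?thesis by linarith
qed

lemma hh_alt: assumes "v < 1" shows "hh v = v * (1 - v)^2 / (1 - v + v^2)"
proof -
  have "(1 - v)^2 > 0" using assms by simp
  thus ?thesis unfolding hh_def using D_pos[of v]
    by (simp add: field_simps power2_eq_square)
qed

lemma hh_eq: assumes "v < 1" shows "hh v = v - pp v"
proof -
  have Dn: "1 - v + v^2 \<noteq> 0" using D_pos[of v] by simp
  have "v - pp v = (v * (1 - v + v^2) - v^2) / (1 - v + v^2)" unfolding pp_def using Dn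
    by (simp add: diff_divide_distrib)
  also have "v * (1 - v + v^2) - v^2 = v * (1 - v)^2" by (simp add: algebra_simps power2_eq_square)
  finally show ?thesis using hh_alt[OF assms] by simp
qed

lemma hh_pos: assumes "0 < v" "v < 1" shows "0 < hh v"
  unfolding hh_alt[OF assms(2)] using assms D_pos[of v] by simp

lemma pp_nonneg: "0 \<le> pp v"
  unfolding pp_def using D_pos[of v] by simp

lemma pp_deriv: "(pp has_real_derivative ppd v) (at v)"
  unfolding pp_def ppd_def using D_pos[of v]
  by (auto intro!: derivative_eq_intros simp: field_simps power2_eq_square)

lemma gg_deriv: assumes "v < 1" shows "(gg has_real_derivative 1 / (1 - v)^2) (at v)"
  unfolding gg_def using assms
  by (auto intro!: derivative_eq_intros simp: field_simps power2_eq_square)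

lemma gg_hh: assumes "v < 1" shows "1 / (1 - v)^2 * hh v = kk v"
proof -
  have n: "(1 - v)^2 \<noteq> 0" using assms by simp
  show ?thesis unfolding hh_alt[OF assms] kk_def using n by simp
qed

lemma kk_mono: assumes "0 \<le> v" "v \<le> u" "u \<le> 1" shows "kk v \<le> kk u"
proof -
  have "v * (1 - u + u^2) \<le> u * (1 - v + v^2)"
  proof -
    have "u * (1 - v + v^2) - v * (1 - u + u^2) = (u - v) * (1 - u * v)"
      by (simp add: algebra_simps power2_eq_square)
    moreover have "0 \<le> (u - v) * (1 - u * v)" using assms
      by (intro mult_nonneg_nonneg) (auto simp: mult_le_one)
    ultimately show ?thesis by linarith
  qed
  thus ?thesis unfolding kk_def using D_pos[of u] D_pos[of v]
    by (simp add: divide_simps mult.commute)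
qed

lemma kk_nonneg: "0 \<le> v \<Longrightarrow> 0 \<le> kk v"
  unfolding kk_def using D_pos[of v] by simp

lemma key_poly: fixes v s :: real assumes "0 \<le> v" "v \<le> 1/2" "0 < s" "s \<le> 1"
  shows "(s * (1 - v + v^2) - v^2) * (1 - v + v^2) \<le> s * ((2 - v) * (1 - v)^2)"
proof -
  define c where "c = (2 - v) * (1 - v)^2 - (1 - v + v^2)^2"
  have id: "s * ((2 - v) * (1 - v)^2) - (s * (1 - v + v^2) - v^2) * (1 - v + v^2)
      = s * c + v^2 * (1 - v + v^2)" unfolding c_def by (simp add: algebra_simps power2_eq_square)
  have "0 \<le> s * c + v^2 * (1 - v + v^2)"
  proof (cases "0 \<le> c")
    case True thus ?thesis using assms D_pos[of v] by simp
  next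
    case False
    hence "c \<le> s * c" using assms by (simp add: mult_le_cancel_right1)
    moreover have "c + v^2 * (1 - v + v^2) = (1 - v) * (1 - 2 * v)"
      unfolding c_def by (simp add: algebra_simps power2_eq_square)
    moreover have "0 \<le> (1 - v) * (1 - 2 * v)" using assms by simp
    ultimately show ?thesis by linarith
  qed
  thus ?thesis using id by linarith
qed

lemma key: assumes "0 < v" "v \<le> 1/2" "0 < s" "s \<le> 1"
  shows "pp v * (s - pp v) \<le> s * (ppd v * hh v)"
proof -
  define D where "D = 1 - v + v^2"
  have D: "0 < D" using D_pos D_def by simp
  have hv: "hh v = v * (1 - v)^2 / D" using hh_alt[of v] assms unfolding D_def by simp
  have pv: "pp v = v^2 / D" unfolding pp_def D_def ..
  have pdv: "ppd v = (2 * v - v^2) / D^2" unfolding ppd_def D_def ..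
  have l: "pp v * (s - pp v) = v^2 * ((s * D - v^2) * D) / D^3"
    unfolding pv using D by (simp add: field_simps power2_eq_square power3_eq_cube)
  have r: "s * (ppd v * hh v) = v^2 * (s * ((2 - v) * (1 - v)^2)) / D^3"
    unfolding pdv hv using D by (simp add: field_simps power2_eq_square power3_eq_cube)
  have "v^2 * ((s * D - v^2) * D) \<le> v^2 * (s * ((2 - v) * (1 - v)^2))"
    using key_poly[of v s] assms unfolding D_def by (intro mult_left_mono) auto
  thus ?thesis unfolding l r using D by (intro divide_right_mono) auto
qed



definition sA :: "(nat \<Rightarrow> real) \<Rightarrow> nat set \<Rightarrow> real \<Rightarrow> real" where
  "sA x A q = q + (\<Sum>l\<in>A. V (q * x l))"
definition PA :: "(nat \<Rightarrow> real) \<Rightarrow> nat set \<Rightarrow> real \<Rightarrow> real" where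
  "PA x A q = (\<Sum>l\<in>A. pp (V (q * x l)))"
definition QA :: "(nat \<Rightarrow> real) \<Rightarrow> nat set \<Rightarrow> real \<Rightarrow> real" where
  "QA x A q = (\<Sum>l\<in>A. kk (V (q * x l)))"
definition Phi :: "(nat \<Rightarrow> real) \<Rightarrow> nat set \<Rightarrow> real \<Rightarrow> real" where
  "Phi x A q = (\<Sum>l\<in>A. gg (V (q * x l))) + 1 / sA x A q - 1"
definition Lam :: "(nat \<Rightarrow> real) \<Rightarrow> nat set \<Rightarrow> real \<Rightarrow> real" where
  "Lam x A q = QA x A q * sA x A q + PA x A q / sA x A q - 1"

lemma hh_w: assumes "0 < v" "v < 1" shows "hh v = w v / wd v"
proof -
  have "exp (v / (1 - v)) > 0" by simp
  thus ?thesis unfolding hh_def w_def wd_def by simp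
qed

lemma Vq_deriv: assumes "0 < q" "0 < c"
  shows "((\<lambda>q. V (q * c)) has_real_derivative hh (V (q * c)) / q) (at q)"
proof -
  have qc: "0 < q * c" using assms by simp
  note p = V_props[OF qc]
  have lin: "((\<lambda>q. q * c) has_real_derivative c) (at q)" by (auto intro!: derivative_eq_intros)
  have "((\<lambda>q. V (q * c)) has_real_derivative inverse (wd (V (q * c))) * c) (at q)"
    using DERIV_chain2[where f=V and g="\<lambda>q. q * c" and x=q, OF V_deriv[OF qc] lin] by simp
  moreover have "inverse (wd (V (q * c))) * c = hh (V (q * c)) / q"
    using hh_w[OF p(1,2)] p(3) assms wd_pos[OF p(1,2)] by (simp add: field_simps)
  ultimately show ?thesis by simp
qed

lemma comp_deriv: assumes "(f has_real_derivative f') (at (V (q * c)))" "0 < q" "0 < c"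
  shows "((\<lambda>q. f (V (q * c))) has_real_derivative f' * (hh (V (q * c)) / q)) (at q)"
  using DERIV_chain2[where f=f and g="\<lambda>q. V (q * c)" and x=q, OF assms(1) Vq_deriv[OF assms(2,3)]] .

context
  fixes x :: "nat \<Rightarrow> real" and A :: "nat set"
  assumes fin: "finite A" and xpos: "\<And>l. l \<in> A \<Longrightarrow> 0 < x l"
begin

abbreviation "v q l \<equiv> V (q * x l)"

lemma v_props: "0 < q \<Longrightarrow> l \<in> A \<Longrightarrow> 0 < v q l \<and> v q l < 1"
  using V_props[of "q * x l"] xpos[of l] by simp

lemma v_mono: "0 < q \<Longrightarrow> q \<le> r \<Longrightarrow> l \<in> A \<Longrightarrow> v q l \<le> v r l"
  using xpos[of l] by (intro V_mono) (auto intro: mult_right_mono)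

lemma sA_pos: "0 < q \<Longrightarrow> q \<le> sA x A q"
  unfolding sA_def using v_props by (auto intro: sum_nonneg less_imp_le)

lemma sA_strict: "0 < q \<Longrightarrow> q < r \<Longrightarrow> sA x A q < sA x A r"
proof -
  assume "0 < q" "q < r"
  hence "(\<Sum>l\<in>A. v q l) \<le> (\<Sum>l\<in>A. v r l)" by (intro sum_mono v_mono) auto
  thus ?thesis using \<open>q < r\<close> unfolding sA_def by linarith
qed

lemma sA_mono: "0 < q \<Longrightarrow> q \<le> r \<Longrightarrow> sA x A q \<le> sA x A r"
  using sA_strict by (cases "q = r") (auto intro: less_imp_le)

lemma sA_deriv: "0 < q \<Longrightarrow> (sA x A has_real_derivative (1 + (\<Sum>l\<in>A. hh (v q l) / q))) (at q)"
  unfolding sA_def[abs_def]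
  by (auto intro!: derivative_eq_intros DERIV_sum Vq_deriv xpos)

lemma PA_deriv: "0 < q \<Longrightarrow> (PA x A has_real_derivative (\<Sum>l\<in>A. ppd (v q l) * (hh (v q l) / q))) (at q)"
  unfolding PA_def[abs_def]
  by (rule DERIV_sum, rule comp_deriv[OF pp_deriv]) (auto simp: xpos)

lemma H_eq: "0 < q \<Longrightarrow> (\<Sum>l\<in>A. hh (v q l)) = sA x A q - q - PA x A q"
proof -
  assume q: "0 < q"
  have "(\<Sum>l\<in>A. hh (v q l)) = (\<Sum>l\<in>A. v q l - pp (v q l))"
    using v_props[OF q] by (intro sum.cong refl hh_eq) auto
  thus ?thesis unfolding sA_def PA_def by (simp add: sum_subtractf)
qed

lemma sA_deriv': "0 < q \<Longrightarrow> (sA x A has_real_derivative (sA x A q - PA x A q) / q) (at q)"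
proof -
  assume q: "0 < q"
  have "1 + (\<Sum>l\<in>A. hh (v q l) / q) = (sA x A q - PA x A q) / q"
    using H_eq[OF q] q by (simp add: sum_divide_distrib[symmetric] field_simps)
  thus ?thesis using sA_deriv[OF q] by simp
qed

lemma Phi_deriv: "0 < q \<Longrightarrow> (Phi x A has_real_derivative Lam x A q / (q * sA x A q)) (at q)"
proof -
  assume q: "0 < q"
  have s: "0 < sA x A q" using sA_pos[OF q] q by simp
  have g: "((\<lambda>q. \<Sum>l\<in>A. gg (v q l)) has_real_derivative
      (\<Sum>l\<in>A. 1 / (1 - v q l)^2 * (hh (v q l) / q))) (at q)"
    by (rule DERIV_sum, rule comp_deriv[OF gg_deriv]) (auto simp: xpos v_props q)
  have sne: "sA x A q \<noteq> 0" using s by simp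
  have i: "((\<lambda>q. 1 / sA x A q) has_real_derivative
      (0 * sA x A q - 1 * ((sA x A q - PA x A q) / q)) / (sA x A q * sA x A q)) (at q)"
    by (rule DERIV_divide[OF DERIV_const sA_deriv'[OF q] sne])
  have d: "(Phi x A has_real_derivative
      (\<Sum>l\<in>A. 1 / (1 - v q l)^2 * (hh (v q l) / q)) - (sA x A q - PA x A q) / q / (sA x A q * sA x A q)) (at q)"
  proof -
    have "(Phi x A has_real_derivative
      (\<Sum>l\<in>A. 1 / (1 - v q l)^2 * (hh (v q l) / q)) +
        (0 * sA x A q - 1 * ((sA x A q - PA x A q) / q)) / (sA x A q * sA x A q) - 0) (at q)"
      unfolding Phi_def[abs_def] by (intro DERIV_diff DERIV_add g i DERIV_const)
    moreover have "(0 * sA x A q - 1 * ((sA x A q - PA x A q) / q)) / (sA x A q * sA x A q)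
       = - ((sA x A q - PA x A q) / q / (sA x A q * sA x A q))" by simp
    ultimately show ?thesis by simp
  qed
  have "(\<Sum>l\<in>A. 1 / (1 - v q l)^2 * (hh (v q l) / q)) = QA x A q / q"
  proof -
    have "(\<Sum>l\<in>A. 1 / (1 - v q l)^2 * (hh (v q l) / q)) = (\<Sum>l\<in>A. kk (v q l) / q)"
      using v_props[OF q] gg_hh by (intro sum.cong refl) (auto simp: mult.assoc[symmetric])
    thus ?thesis unfolding QA_def by (simp add: sum_divide_distrib)
  qed
  moreover have "QA x A q / q - (sA x A q - PA x A q) / q / (sA x A q * sA x A q) = Lam x A q / (q * sA x A q)"
    unfolding Lam_def using s q by (simp add: field_simps power2_eq_square)
  ultimately show ?thesis using d by simp
qed

lemma PsA_deriv_nonneg: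
  assumes q: "0 < q" and vb: "\<And>l. l \<in> A \<Longrightarrow> v q l \<le> 1/2" and sb: "sA x A q \<le> 1"
  shows "\<exists>y. ((\<lambda>q. PA x A q / sA x A q) has_real_derivative y) (at q) \<and> 0 \<le> y"
proof -
  let ?s = "sA x A q" and ?P = "PA x A q"
  let ?P' = "\<Sum>l\<in>A. ppd (v q l) * (hh (v q l) / q)"
  have s: "0 < ?s" using sA_pos[OF q] q by simp
  have d: "((\<lambda>q. PA x A q / sA x A q) has_real_derivative
      (?P' * ?s - ?P * ((?s - ?P) / q)) / (?s * ?s)) (at q)"
    using DERIV_divide[OF PA_deriv[OF q] sA_deriv'[OF q]] s by simp
  have "?P * (?s - ?P) \<le> ?s * (\<Sum>l\<in>A. ppd (v q l) * hh (v q l))"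
  proof -
    have "?P * (?s - ?P) = (\<Sum>l\<in>A. pp (v q l) * (?s - ?P))" unfolding PA_def by (simp add: sum_distrib_right)
    also have "\<dots> \<le> (\<Sum>l\<in>A. pp (v q l) * (?s - pp (v q l)))"
    proof (rule sum_mono)
      fix l assume l: "l \<in> A"
      have "pp (v q l) \<le> ?P" unfolding PA_def
        using fin l pp_nonneg by (intro member_le_sum) auto
      hence "?s - ?P \<le> ?s - pp (v q l)" by simp
      thus "pp (v q l) * (?s - ?P) \<le> pp (v q l) * (?s - pp (v q l))"
        using pp_nonneg by (rule mult_left_mono)
    qed
    also have "\<dots> \<le> (\<Sum>l\<in>A. ?s * (ppd (v q l) * hh (v q l)))"
      using v_props[OF q] vb s sb by (intro sum_mono key) auto
    finally show ?thesis by (simp add: sum_distrib_left)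
  qed
  hence "0 \<le> ?P' * ?s - ?P * ((?s - ?P) / q)"
    using q s by (simp add: sum_divide_distrib[symmetric] field_simps)
  thus ?thesis using d s by (intro exI[of _ "(?P' * ?s - ?P * ((?s - ?P) / q)) / (?s * ?s)"]) auto
qed

lemma Lam_mono:
  assumes a: "0 < a" "a \<le> b" and vb: "\<And>l. l \<in> A \<Longrightarrow> v b l \<le> 1/2" and sb: "sA x A b \<le> 1"
  shows "Lam x A a \<le> Lam x A b"
proof -
  have Q: "QA x A a \<le> QA x A b" unfolding QA_def
    using a v_props v_mono by (intro sum_mono kk_mono) (auto intro: less_imp_le)
  have "0 \<le> QA x A a" unfolding QA_def using a v_props by (intro sum_nonneg kk_nonneg) (auto intro: less_imp_le)
  moreover have "0 \<le> sA x A a" using sA_pos[of a] a by simp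
  ultimately have QS: "QA x A a * sA x A a \<le> QA x A b * sA x A b"
    using Q sA_mono[OF a] by (intro mult_mono) auto
  have PS: "PA x A a / sA x A a \<le> PA x A b / sA x A b"
  proof (rule DERIV_nonneg_imp_increasing_open[OF a(2)])
    fix z assume z: "a < z" "z < b"
    show "\<exists>y. ((\<lambda>q. PA x A q / sA x A q) has_real_derivative y) (at z) \<and> 0 \<le> y"
    proof (rule PsA_deriv_nonneg)
      show "0 < z" using z a by simp
      fix l assume l: "l \<in> A"
      have "v b l \<le> 1/2" using vb l by simp
      moreover have "v z l \<le> v b l" using v_mono[of z b l] l z a by simp
      ultimately show "v z l \<le> 1/2" by linarith
    next
      show "sA x A z \<le> 1" using sA_mono[of z b] z a sb by simp
    qed
  next
    show "continuous_on {a..b} (\<lambda>q. PA x A q / sA x A q)"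
    proof (rule DERIV_atLeastAtMost_imp_continuous_on)
      fix z assume z: "a \<le> z" "z \<le> b"
      hence z0: "0 < z" using a by simp
      have "sA x A z \<noteq> 0" using sA_pos[OF z0] z0 by simp
      thus "\<exists>y. ((\<lambda>q. PA x A q / sA x A q) has_real_derivative y) (at z)"
        using DERIV_divide[OF PA_deriv[OF z0] sA_deriv'[OF z0]] by blast
    qed
  qed
  show ?thesis using QS PS unfolding Lam_def by simp
qed

lemma Phi_cont: assumes "0 < a" shows "continuous_on {a..b} (Phi x A)"
proof (rule DERIV_atLeastAtMost_imp_continuous_on)
  fix z assume "a \<le> z" "z \<le> b"
  hence "0 < z" using assms by simp
  thus "\<exists>y. (Phi x A has_real_derivative y) (at z)" using Phi_deriv by blast
qed

lemma path:
  assumes ci: "0 < ci" and cj: "cj \<le> ci" "0 < cj"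
    and qA: "0 < qA" "sA x A qA = 1" "\<And>l. l \<in> A \<Longrightarrow> v qA l \<le> 1/2"
    and qi: "0 < qi" "V (qi * ci) = 1 - sA x A qi"
    and qj: "0 < qj" "V (qj * cj) = 1 - sA x A qj"
    and opt: "Phi x A qA \<le> Phi x A qj"
  shows "Phi x A qj \<le> Phi x A qi"
proof -
  have qij: "qi \<le> qj"
  proof (rule ccontr)
    assume "\<not> qi \<le> qj"
    hence lt: "qj < qi" by simp
    have "qj * cj < qi * ci" using lt cj ci qj
      by (meson mult_le_cancel_left_pos mult_strict_right_mono order_le_less_trans)
    hence "V (qj * cj) < V (qi * ci)" using qj cj by (intro V_strict) auto
    moreover have "sA x A qj < sA x A qi" using sA_strict lt qj by auto
    ultimately show False using qi qj by simp
  qed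
  have qjA: "qj < qA"
  proof (rule ccontr)
    assume "\<not> qj < qA"
    hence "sA x A qA \<le> sA x A qj" using sA_mono[of qA qj] qA by simp
    moreover have "0 < V (qj * cj)" by (intro V_props(1)) (use qj cj in simp)
    ultimately show False using qA qj by simp
  qed
  show ?thesis
  proof (cases "\<exists>z. qi < z \<and> z < qj \<and> 0 < Lam x A z")
    case True
    then obtain z where z: "qi < z" "z < qj" "0 < Lam x A z" by blast
    have "Phi x A qj < Phi x A qA"
    proof (rule DERIV_pos_imp_increasing_open[OF qjA])
      fix t assume t: "qj < t" "t < qA"
      have t0: "0 < t" using t qj by simp
      have "Lam x A z \<le> Lam x A t"
      proof (rule Lam_mono)
        show "0 < z" "z \<le> t" using z t qi by auto
        fix l assume l: "l \<in> A"
        have "v t l \<le> v qA l" using v_mono[of t qA l] l t t0 by simp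
        thus "v t l \<le> 1/2" using qA(3)[OF l] by linarith
      next
        show "sA x A t \<le> 1" using sA_mono[of t qA] t t0 qA by simp
      qed
      hence "0 < Lam x A t" using z by simp
      moreover have "0 < t * sA x A t" using sA_pos[OF t0] t0 by simp
      ultimately show "\<exists>y. (Phi x A has_real_derivative y) (at t) \<and> 0 < y"
        using Phi_deriv[OF t0] by (intro exI[of _ "Lam x A t / (t * sA x A t)"]) simp
    qed (rule Phi_cont[OF qj(1)])
    thus ?thesis using opt by simp
  next
    case False
    have "(\<lambda>q. - Phi x A q) qi \<le> (\<lambda>q. - Phi x A q) qj"
    proof (rule DERIV_nonneg_imp_increasing_open[OF qij])
      fix t assume t: "qi < t" "t < qj"
      have t0: "0 < t" using t qi by simp
      have "Lam x A t \<le> 0" using False t by auto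
      moreover have "0 < t * sA x A t" using sA_pos[OF t0] t0 by simp
      ultimately have "0 \<le> - (Lam x A t / (t * sA x A t))" by (simp add: divide_nonpos_pos)
      thus "\<exists>y. ((\<lambda>q. - Phi x A q) has_real_derivative y) (at t) \<and> 0 \<le> y"
        using DERIV_minus[OF Phi_deriv[OF t0]] by blast
    next
      show "continuous_on {qi..qj} (\<lambda>q. - Phi x A q)"
        using Phi_cont[OF qi(1)] by (intro continuous_intros)
    qed
    thus ?thesis by simp
  qed
qed

end



lemma ins_char:
  fixes \<theta> :: "nat \<Rightarrow> real"
  assumes fin: "finite A" and j: "j \<notin> A"
  defines "q \<equiv> qbar0 \<theta> (insert j A)"
  shows "0 < q" "q < 1" "V (q * exp (\<theta> j - 1)) = 1 - sA (\<lambda>l. exp (\<theta> l - 1)) A q"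
    "re_bar \<theta> (insert j A) = Phi (\<lambda>l. exp (\<theta> l - 1)) A q"
proof -
  note p = qbar0_props[of "insert j A" \<theta>, folded q_def]
  show q: "0 < q" "q < 1" using p fin by auto
  have "(\<Sum>i\<in>insert j A. V (q * exp (\<theta> i - 1))) = 1 - q" using p fin by auto
  hence "V (q * exp (\<theta> j - 1)) + (\<Sum>i\<in>A. V (q * exp (\<theta> i - 1))) = 1 - q"
    using fin j by simp
  thus eq: "V (q * exp (\<theta> j - 1)) = 1 - sA (\<lambda>l. exp (\<theta> l - 1)) A q"
    unfolding sA_def by simp
  have s: "q \<le> sA (\<lambda>l. exp (\<theta> l - 1)) A q"
  proof -
    have "0 \<le> (\<Sum>l\<in>A. V (q * exp (\<theta> l - 1)))"
      by (intro sum_nonneg less_imp_le V_props(1)) (use q in simp)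
    thus ?thesis unfolding sA_def by simp
  qed
  have "re_bar \<theta> (insert j A) = qbar \<theta> (insert j A) j / (1 - qbar \<theta> (insert j A) j)
     + (\<Sum>l\<in>A. qbar \<theta> (insert j A) l / (1 - qbar \<theta> (insert j A) l))"
    unfolding re_bar_def using fin j by simp
  also have "\<dots> = (1 - sA (\<lambda>l. exp (\<theta> l - 1)) A q) / (sA (\<lambda>l. exp (\<theta> l - 1)) A q)
     + (\<Sum>l\<in>A. gg (V (q * exp (\<theta> l - 1))))"
    unfolding qbar_def q_def[symmetric] eq gg_def by simp
  also have "\<dots> = Phi (\<lambda>l. exp (\<theta> l - 1)) A q"
    unfolding Phi_def using s q by (simp add: field_simps)
  finally show "re_bar \<theta> (insert j A) = Phi (\<lambda>l. exp (\<theta> l - 1)) A q" .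
qed

lemma A_char:
  fixes \<theta> :: "nat \<Rightarrow> real"
  assumes fin: "finite A" and ne: "A \<noteq> {}"
  defines "q \<equiv> qbar0 \<theta> A"
  shows "0 < q" "q < 1" "sA (\<lambda>l. exp (\<theta> l - 1)) A q = 1"
    "re_bar \<theta> A = Phi (\<lambda>l. exp (\<theta> l - 1)) A q"
proof -
  note p = qbar0_props[OF fin ne, of \<theta>, folded q_def]
  show q: "0 < q" "q < 1" using p by auto
  show s: "sA (\<lambda>l. exp (\<theta> l - 1)) A q = 1" unfolding sA_def using p by simp
  show "re_bar \<theta> A = Phi (\<lambda>l. exp (\<theta> l - 1)) A q"
    unfolding re_bar_def Phi_def s qbar_def q_def[symmetric] gg_def by simp
qed

lemma swap:
  fixes \<theta> :: "nat \<Rightarrow> real"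
  assumes fin: "finite A" and ne: "A \<noteq> {}" and i: "i \<notin> A" and j: "j \<notin> A"
    and th: "\<theta> j \<le> \<theta> i"
    and half: "\<And>l. l \<in> A \<Longrightarrow> qbar \<theta> A l < 1/2"
    and opt: "re_bar \<theta> A \<le> re_bar \<theta> (insert j A)"
  shows "re_bar \<theta> (insert j A) \<le> re_bar \<theta> (insert i A)"
proof -
  let ?x = "\<lambda>l. exp (\<theta> l - 1)"
  note a = A_char[OF fin ne, of \<theta>]
  note ci = ins_char[OF fin i, of \<theta>]
  note cj = ins_char[OF fin j, of \<theta>]
  have "Phi ?x A (qbar0 \<theta> (insert j A)) \<le> Phi ?x A (qbar0 \<theta> (insert i A))"
  proof (rule path[OF fin])
    show "0 < ?x i" "0 < ?x j" "?x j \<le> ?x i" using th by auto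
    show "0 < qbar0 \<theta> A" "sA ?x A (qbar0 \<theta> A) = 1" using a by auto
    fix l assume "l \<in> A"
    thus "V (qbar0 \<theta> A * ?x l) \<le> 1/2" using half[of l] unfolding qbar_def by simp
  next
    show "0 < qbar0 \<theta> (insert i A)" "0 < qbar0 \<theta> (insert j A)" using ci cj by auto
    show "V (qbar0 \<theta> (insert i A) * ?x i) = 1 - sA ?x A (qbar0 \<theta> (insert i A))" using ci by simp
    show "V (qbar0 \<theta> (insert j A) * ?x j) = 1 - sA ?x A (qbar0 \<theta> (insert j A))" using cj by simp
    show "Phi ?x A (qbar0 \<theta> A) \<le> Phi ?x A (qbar0 \<theta> (insert j A))" using opt a cj by simp
  qed auto
  thus ?thesis using ci cj by simp
qed



theorem lemma6:
  fixes n :: nat and \<theta> :: "nat \<Rightarrow> real" and S :: "nat set"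
  assumes mono: "\<And>i j. 1 \<le> i \<Longrightarrow> i \<le> j \<Longrightarrow> j \<le> n \<Longrightarrow> \<theta> j \<le> \<theta> i"
    and nonneg: "\<And>i. 1 \<le> i \<Longrightarrow> i \<le> n \<Longrightarrow> 0 \<le> \<theta> i"
    and half: "\<And>T i. T \<subseteq> {1..n} \<Longrightarrow> T \<noteq> {} \<Longrightarrow> i \<in> T \<Longrightarrow> qbar \<theta> T i < 1/2"
    and S_sub: "S \<subseteq> {1..n}" and S_ne: "S \<noteq> {}"
    and S_opt: "\<And>T. T \<subseteq> {1..n} \<Longrightarrow> T \<noteq> {} \<Longrightarrow> re_bar \<theta> T \<le> re_bar \<theta> S"
    and k2: "card S \<ge> 2"
  shows "\<forall>T. T \<subseteq> {1..n} \<and> T \<noteq> {} \<longrightarrow> re_bar \<theta> T \<le> re_bar \<theta> {1..card S}"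
proof -
  define k where "k = card S"
  have kn: "k \<le> n" unfolding k_def using card_mono[OF _ S_sub] by simp
  have k2': "2 \<le> k" using k2 k_def by simp
  have main: "\<And>S'. card (S' - {1..k}) = m \<Longrightarrow> S' \<subseteq> {1..n} \<Longrightarrow> card S' = k \<Longrightarrow>
      (\<forall>T. T \<subseteq> {1..n} \<and> T \<noteq> {} \<longrightarrow> re_bar \<theta> T \<le> re_bar \<theta> S') \<Longrightarrow>
      re_bar \<theta> S' \<le> re_bar \<theta> {1..k}" for m
  proof (induction m rule: less_induct)
    case (less m S')
    have finS': "finite S'" using less.prems(2) finite_subset by blast
    show ?case
    proof (cases "S' - {1..k} = {}")
      case True
      hence "S' \<subseteq> {1..k}" by blast
      hence "S' = {1..k}" using card_subset_eq[of "{1..k}" S'] less.prems(3) by simp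
      thus ?thesis by simp
    next
      case False
      then obtain j where j: "j \<in> S'" "j \<notin> {1..k}" by blast
      have "\<not> {1..k} \<subseteq> S'"
      proof
        assume sub: "{1..k} \<subseteq> S'"
        hence "insert j {1..k} \<subseteq> S'" using j by blast
        hence "card (insert j {1..k}) \<le> card S'" using finS' by (intro card_mono)
        thus False using j less.prems(3) by simp
      qed
      then obtain i where i: "i \<in> {1..k}" "i \<notin> S'" by blast
      have jn: "j \<in> {1..n}" using j less.prems(2) by blast
      have ij: "i \<le> j" using i j jn by auto
      have th: "\<theta> j \<le> \<theta> i" using mono[of i j] i ij jn by auto
      define A where "A = S' - {j}"
      have finA: "finite A" using finS' A_def by simp
      have cardA: "card A = k - 1" using A_def j less.prems(3) finS' by simp
      have neA: "A \<noteq> {}"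
      proof
        assume "A = {}"
        hence "card A = 0" by simp
        thus False using cardA k2' by simp
      qed
      have Asub: "A \<subseteq> {1..n}" using A_def less.prems(2) by blast
      have S'eq: "S' = insert j A" using A_def j by blast
      have jA: "j \<notin> A" "i \<notin> A" using A_def i by auto
      have halfA: "\<And>l. l \<in> A \<Longrightarrow> qbar \<theta> A l < 1/2" using half[OF Asub neA] by simp
      have optA: "re_bar \<theta> A \<le> re_bar \<theta> (insert j A)"
        using less.prems(4) Asub neA S'eq by auto
      have sw: "re_bar \<theta> S' \<le> re_bar \<theta> (insert i A)"
        using swap[OF finA neA jA(2) jA(1) th halfA optA] S'eq by simp
      define S'' where "S'' = insert i A"
      have S''sub: "S'' \<subseteq> {1..n}" using S''_def Asub i kn by auto
      have cardS'': "card S'' = k" using S''_def cardA jA finA k2' by simp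
      have optS'': "\<forall>T. T \<subseteq> {1..n} \<and> T \<noteq> {} \<longrightarrow> re_bar \<theta> T \<le> re_bar \<theta> S''"
      proof (intro allI impI)
        fix T assume "T \<subseteq> {1..n} \<and> T \<noteq> {}"
        hence "re_bar \<theta> T \<le> re_bar \<theta> S'" using less.prems(4) by blast
        thus "re_bar \<theta> T \<le> re_bar \<theta> S''" using sw S''_def by simp
      qed
      have "S'' - {1..k} = (S' - {1..k}) - {j}" using S''_def A_def i j by auto
      hence "card (S'' - {1..k}) < m" using less.prems(1) j finS'
        using card_Diff1_less[of "S' - {1..k}" j] by simp
      hence "re_bar \<theta> S'' \<le> re_bar \<theta> {1..k}"
        using less.IH S''sub cardS'' optS'' by blast
      thus ?thesis using sw S''_def by simp
    qed
  qed
  have "re_bar \<theta> S \<le> re_bar \<theta> {1..k}"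
    using main[OF refl S_sub k_def[symmetric]] S_opt by blast
  thus ?thesis using S_opt k_def by (metis order_trans)
qed


end
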